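(* Let $0<\mu<1/2$ be such that for every $\rho>0$ the spiral $t\mapsto(\rho\cos t,\rho\sin t,\mu\rho t)$ is self-expanded, and let $\alpha=\arccos(1/\sqrt5)$. There exists an integer $N\ge2$ such that for every $r_0>0$, setting $r=Nr_0$ and $\gamma(t)=(r\cos t,r\sin t,\mu rt)$, we have $C(\tau,\alpha)\cap\mathrm{Cyl}(r_0)=\emptyset$ for all $\tau\ge0$, where $\mathrm{Cyl}(r_0)=\{(x,y,z)\in\mathbb{R}^3:x^2+y^2=r_0^2,\ z\in\mathbb{R}\}$.
   Context: $\mathbb{R}^3$ carries the Euclidean inner product $\langle\cdot,\cdot\rangle$ and norm $\|\cdot\|$. A curve is self-expanded if for all $t_1\le t_2\le t_3$: $\|\gamma(t_1)-\gamma(t_2)\|\le\|\gamma(t_1)-\gamma(t_3)\|$. For $v\in\mathbb{S}^2$ and $\alpha\in[0,\pi)$, $C(v,\alpha)=\{u:\langle u,v\rangle>\|u\|\cos\alpha\}\cup\{0\}$, and $C(\tau,\alpha)=\gamma(\tau)+C\big(\gamma'(\tau)/\|\gamma'(\tau)\|,\alpha\big)$. *)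

theory Defs
  imports "HOL-Analysis.Analysis"
begin

definition self_expanded :: "(real \<Rightarrow> real^3) \<Rightarrow> bool" where
  "self_expanded \<gamma> \<longleftrightarrow>
     (\<forall>t1 t2 t3. t1 \<le> t2 \<and> t2 \<le> t3 \<longrightarrow> norm (\<gamma> t1 - \<gamma> t2) \<le> norm (\<gamma> t1 - \<gamma> t3))"

definition cone_set :: "real^3 \<Rightarrow> real \<Rightarrow> (real^3) set" where
  "cone_set v \<alpha> = {u. inner u v > norm u * cos \<alpha>} \<union> {0}"

definition curve_cone :: "(real \<Rightarrow> real^3) \<Rightarrow> real \<Rightarrow> real \<Rightarrow> (real^3) set" where
  "curve_cone \<gamma> \<tau> \<alpha> =
     (\<lambda>u. \<gamma> \<tau> + u) ` cone_set (vector_derivative \<gamma> (at \<tau>) /\<^sub>R norm (vector_derivative \<gamma> (at \<tau>))) \<alpha>"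

definition spiral :: "real \<Rightarrow> real \<Rightarrow> real \<Rightarrow> real^3" where
  "spiral \<mu> \<rho> t = vector [\<rho> * cos t, \<rho> * sin t, \<mu> * \<rho> * t]"

definition Cyl :: "real \<Rightarrow> (real^3) set" where
  "Cyl r0 = {p. (p$1)^2 + (p$2)^2 = r0^2}"

end

theory Submission imports Defs begin
lemma key_ineq:
  fixes \<mu> q r0 K N a b c :: real
  assumes mu: "0 < \<mu>" "\<mu> < 1/2" and q: "q = 1 - 4*\<mu>^2"
    and r0: "r0 > 0" and K: "K = N - 1" "K \<ge> 11/q" "K \<ge> 1"
    and cyl: "(N*r0 + a)^2 + b^2 = r0^2"
  shows "sqrt 5 * (b + \<mu>*c) \<le> sqrt (1+\<mu>^2) * sqrt (a^2+b^2+c^2)"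
proof -
  have "\<mu>*\<mu> < (1/2)*(1/2)" using mu by (intro mult_strict_mono) auto
  then have m2: "\<mu>^2 < 1/4" by (simp add: power2_eq_square)
  have qpos: "q > 0" and qle: "q \<le> 1" using m2 q by auto
  have b2: "b^2 \<le> r0^2" using cyl by (metis le_add_same_cancel2 zero_le_power2)
  have "(N*r0 + a)^2 \<le> r0^2" using cyl by (metis le_add_same_cancel1 zero_le_power2)
  then have "\<bar>N*r0 + a\<bar> \<le> r0" using r0 by (metis abs_le_square_iff abs_of_pos)
  then have ka: "-a \<ge> K*r0" using K by (auto simp: algebra_simps)
  have "K*r0 \<ge> 0" using K r0 by simp
  then have "(K*r0)^2 \<le> (-a)^2" using ka by (intro power_mono) auto
  then have ak: "a^2 \<ge> K^2*r0^2" by (simp add: power_mult_distrib)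
  have "K*1 \<le> K*K" using K by (intro mult_left_mono) auto
  then have "K^2 \<ge> 11/q" using K(2) unfolding power2_eq_square by linarith
  then have "K^2*r0^2 \<ge> (11/q)*r0^2" by (intro mult_right_mono) auto
  with ak have a2: "a^2 \<ge> (11/q)*r0^2" by linarith
  have "4 \<le> 4/q" using qpos qle by (simp add: field_simps)
  moreover have "25*\<mu>^2/q \<le> 7/q" using qpos m2 by (intro divide_right_mono) auto
  ultimately have "(4 + 25*\<mu>^2/q) \<le> 11/q" by simp
  then have "(4 + 25*\<mu>^2/q) * b^2 \<le> (11/q)*r0^2"
    using b2 qpos by (intro mult_mono) auto
  with a2 have A: "a^2 \<ge> 4*b^2 + 25*\<mu>^2*b^2/q" by (simp add: algebra_simps)
  have sq: "q*c^2 - 10*\<mu>*b*c \<ge> -25*\<mu>^2*b^2/q"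
  proof -
    have "0 \<le> (q*c - 5*\<mu>*b)^2/q" using qpos by simp
    also have "\<dots> = q*c^2 - 10*\<mu>*b*c + 25*\<mu>^2*b^2/q" using qpos
      by (simp add: field_simps power2_eq_square)
    finally show ?thesis by simp
  qed
  have e: "(1+\<mu>^2)*(a^2+b^2+c^2) - 5*(b+\<mu>*c)^2 = (1+\<mu>^2)*a^2 - (4-\<mu>^2)*b^2 + q*c^2 - 10*\<mu>*b*c"
    unfolding q by (simp add: algebra_simps power2_eq_square)
  have "\<mu>^2*a^2 \<ge> 0" "\<mu>^2*b^2 \<ge> 0" by auto
  moreover have "(1+\<mu>^2)*a^2 = a^2 + \<mu>^2*a^2" "(4-\<mu>^2)*b^2 = 4*b^2 - \<mu>^2*b^2"
    "25*\<mu>^2*b^2/q = 25*\<mu>^2*b^2/q" by (simp_all add: algebra_simps)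
  ultimately have "5*(b+\<mu>*c)^2 \<le> (1+\<mu>^2)*(a^2+b^2+c^2)" using A sq e by linarith
  then have "sqrt (5*(b+\<mu>*c)^2) \<le> sqrt ((1+\<mu>^2)*(a^2+b^2+c^2))" by (rule real_sqrt_le_mono)
  then have "sqrt 5 * \<bar>b+\<mu>*c\<bar> \<le> sqrt (1+\<mu>^2) * sqrt (a^2+b^2+c^2)"
    by (simp add: real_sqrt_mult)
  moreover have "sqrt 5 * (b+\<mu>*c) \<le> sqrt 5 * \<bar>b+\<mu>*c\<bar>" by (intro mult_left_mono) auto
  ultimately show ?thesis by linarith
qed
lemma vec3_decomp: "(vector [x,y,z] :: real^3) = x *\<^sub>R axis 1 1 + y *\<^sub>R axis 2 1 + z *\<^sub>R axis 3 1"
  by (simp add: vec_eq_iff forall_3 axis_def)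

lemma spiral_deriv:
  "vector_derivative (spiral \<mu> \<rho>) (at t) = vector [-\<rho> * sin t, \<rho> * cos t, \<mu> * \<rho>]"
proof -
  have "((\<lambda>t. (\<rho> * cos t) *\<^sub>R (axis 1 1::real^3) + (\<rho> * sin t) *\<^sub>R axis 2 1 + (\<mu>*\<rho>*t) *\<^sub>R axis 3 1)
     has_vector_derivative ((-\<rho> * sin t) *\<^sub>R axis 1 1 + (\<rho> * cos t) *\<^sub>R axis 2 1 + (\<mu>*\<rho>) *\<^sub>R axis 3 1)) (at t)"
    by (auto intro!: derivative_eq_intros simp: mult.commute)
  then have "(spiral \<mu> \<rho> has_vector_derivative vector [-\<rho> * sin t, \<rho> * cos t, \<mu> * \<rho>]) (at t)"
    unfolding spiral_def vec3_decomp by (simp add: fun_eq_iff algebra_simps)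
  then show ?thesis by (rule vector_derivative_at)
qed

lemma norm3: "norm (u::real^3) = sqrt ((u$1)^2 + (u$2)^2 + (u$3)^2)"
  by (simp add: norm_eq_sqrt_inner inner_vec_def sum_3 power2_eq_square)
lemma inner3: "inner (u::real^3) v = u$1 * v$1 + u$2 * v$2 + u$3 * v$3"
  by (simp add: inner_vec_def sum_3)

lemma rot_id:
  fixes r u1 u2 t :: real
  shows "(r* cos t + u1)^2 + (r* sin t + u2)^2 = (r + (u1* cos t + u2* sin t))^2 + (-u1* sin t + u2* cos t)^2"
    and "u1^2 + u2^2 = (u1* cos t + u2* sin t)^2 + (-u1* sin t + u2* cos t)^2"
proof -
  have s: "sin t * sin t + cos t * cos t = 1" using sin_cos_squared_add[of t] by (simp add: power2_eq_square)
  show "(r* cos t + u1)^2 + (r* sin t + u2)^2 = (r + (u1* cos t + u2* sin t))^2 + (-u1* sin t + u2* cos t)^2"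
    using s by algebra
  show "u1^2 + u2^2 = (u1* cos t + u2* sin t)^2 + (-u1* sin t + u2* cos t)^2"
    using s by algebra
qed

theorem lemma4p6:
  fixes \<mu> :: real
  assumes "0 < \<mu>" and "\<mu> < 1/2"
    and "\<forall>\<rho>>0. self_expanded (spiral \<mu> \<rho>)"
  shows "\<exists>N::int. N \<ge> 2 \<and>
           (\<forall>r0>0. \<forall>\<tau>\<ge>0.
              curve_cone (spiral \<mu> (of_int N * r0)) \<tau> (arccos (1 / sqrt 5)) \<inter> Cyl r0 = {})"
proof -
  define q where "q = 1 - 4*\<mu>^2"
  have "\<mu>*\<mu> < (1/2)*(1/2)" using assms by (intro mult_strict_mono) auto
  then have qpos: "q > 0" by (simp add: q_def power2_eq_square)
  define N where "N = \<lceil>11/q\<rceil> + 1"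
  have Kge: "real_of_int N - 1 \<ge> 11/q" unfolding N_def by simp
  have "11/q > 0" using qpos by simp
  then have "\<lceil>11/q\<rceil> \<ge> 1" by (metis ceiling_le_zero not_le zero_less_ceiling int_one_le_iff_zero_less)
  then have N2: "N \<ge> 2" unfolding N_def by simp
  have Kge1: "real_of_int N - 1 \<ge> 1" using N2 by simp
  have cosa: "cos (arccos (1 / sqrt 5)) = 1 / sqrt 5"
  proof (rule cos_arccos)
    have "sqrt 5 \<ge> 1" by simp
    then show "1 / sqrt 5 \<le> 1" by (auto simp: field_simps)
    show "-1 \<le> 1 / sqrt 5" by (rule order.trans[of _ 0]) auto
  qed
  show ?thesis
  proof (intro exI[of _ N] conjI[OF N2] allI impI)
    fix r0 \<tau> :: real
    assume r0: "r0 > 0" and "\<tau> \<ge> 0"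
    define r where "r = of_int N * r0"
    have rpos: "r > 0" using r0 N2 unfolding r_def by simp
    define D where "D = (vector [-r * sin \<tau>, r * cos \<tau>, \<mu> * r] :: real^3)"
    define s where "s = sqrt (1 + \<mu>^2)"
    have spos: "s > 0" unfolding s_def by (simp add: add_pos_nonneg)
    have nD: "norm D = r * s"
    proof -
      have "norm D = sqrt (r^2 * (1 + \<mu>^2))"
        unfolding norm3 D_def by (simp add: power_mult_distrib algebra_simps sin_squared_eq)
      then show ?thesis using rpos by (simp add: real_sqrt_mult s_def)
    qed
    show "curve_cone (spiral \<mu> (of_int N * r0)) \<tau> (arccos (1 / sqrt 5)) \<inter> Cyl r0 = {}"
    proof (rule ccontr)
      assume "curve_cone (spiral \<mu> (of_int N * r0)) \<tau> (arccos (1 / sqrt 5)) \<inter> Cyl r0 \<noteq> {}"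
      then obtain u where
        uc: "u \<in> cone_set (D /\<^sub>R norm D) (arccos (1 / sqrt 5))"
        and cy: "((spiral \<mu> r \<tau> + u)$1)^2 + ((spiral \<mu> r \<tau> + u)$2)^2 = r0^2"
        unfolding curve_cone_def Cyl_def spiral_deriv D_def r_def by auto
      have cy': "(r* cos \<tau> + u$1)^2 + (r* sin \<tau> + u$2)^2 = r0^2"
        using cy by (simp add: spiral_def)
      define a where "a = u$1* cos \<tau> + u$2* sin \<tau>"
      define b where "b = -u$1* sin \<tau> + u$2* cos \<tau>"
      define c where "c = u$3"
      have cyl: "(of_int N*r0 + a)^2 + b^2 = r0^2"
        using cy' rot_id(1)[of r \<tau> "u$1" "u$2"] unfolding a_def b_def r_def by simp
      have nu: "norm u = sqrt (a^2+b^2+c^2)"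
        unfolding norm3 a_def b_def c_def using rot_id(2)[of "u$1" "u$2" \<tau>] by simp
      have iu: "inner u (D /\<^sub>R norm D) = (b + \<mu>*c)/s"
      proof -
        have "inner u D = r * (b + \<mu>*c)"
          unfolding inner3 D_def b_def c_def by (simp add: algebra_simps)
        then show ?thesis using rpos spos by (simp add: nD field_simps)
      qed
      have key: "sqrt 5 * (b + \<mu>*c) \<le> s * norm u"
        unfolding nu s_def
        by (rule key_ineq[OF assms(1,2) q_def r0 refl Kge Kge1 cyl])
      show False
      proof (cases "u = 0")
        case True
        then have "r^2 = r0^2" using cy' by (simp add: power_mult_distrib algebra_simps sin_squared_eq)
        then have "r = r0" using rpos r0 by (simp add: power2_eq_iff)
        then show False using N2 r0 unfolding r_def by simp
      next
        case False
        then have "(b + \<mu>*c)/s > norm u * (1 / sqrt 5)"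
          using uc iu cosa unfolding cone_set_def by auto
        then have "sqrt 5 * (b + \<mu>*c) > s * norm u"
          using spos by (simp add: field_simps)
        then show False using key by simp
      qed
    qed
  qed
qed

end
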